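(* Let $1<p<\infty$, let $E$ be a separable Banach space, and let $\mu_1,\mu_2$ be two $\sigma$-additive $\sigma$-finite separable measures on the same measurable space $\Omega$ that are mutually absolutely continuous. Let $G$ be a countable amenable group and $\{\alpha_g\}_{g\in G}$ a group of invertible measurable maps of $\Omega$ preserving the (common) class of null sets, acting metrically freely. For $i=1,2$ let $D_i=L^p_{\mu_i}(\Omega,E)$, let $A_i=L^\infty_{\mu_1}(\Omega,L(E))\ (=L^\infty_{\mu_2}(\Omega,L(E)))$ act on $D_i$ by multiplication, let $T^i_g$ be the isometries $(T^i_gf)(x)=\rho^i_g(x)^{1/p}f(\alpha_g^{-1}(x))$ of $D_i$, and let $B(A_i,T^i_g)$ be the closed subalgebra of $L(D_i)$ generated by $A_i$ and $\{T^i_g\}$. Then $B(A_1,T^1_g)$ and $B(A_2,T^2_g)$ are isomorphic as Banach algebras, via the isomorphism determined by the natural identification $A_1\cong A_2$ and $T^1_g\mapsto T^2_g$; i.e. for every finite $F$ and $a_g\in A_1$, $\|\sum_{g\in F}a_gT^1_g\|_{L(D_1)}=\|\sum_{g\in F}a_gT^2_g\|_{L(D_2)}$.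
   Context: $\rho^i_g$ is the Radon–Nikodym derivative of $\Delta\mapsto\mu_i(\alpha_g^{-1}(\Delta))$ with respect to $\mu_i$; $\alpha_{gh}=\alpha_g\circ\alpha_h$, $\alpha_e=\mathrm{id}$. $G$ acts metrically freely if for every finite $\{g_1,\dots,g_k\}\subset G$ and measurable $\Delta$ with $\mu_1(\Delta)>0$ there is measurable $\Delta'\subset\Delta$, $\mu_1(\Delta')>0$, with $\mu_1(\alpha_{g_i}(\Delta')\cap\alpha_{g_j}(\Delta'))=0$ for $i\neq j$ (equivalently for $\mu_2$, since the null sets coincide). *)

theory Defs
  imports "HOL-Analysis.Analysis" "HOL-Algebra.Group"
begin

definition separable_measure :: "'a measure \<Rightarrow> bool" where
  "separable_measure M \<longleftrightarrow>
     (\<exists>C. countable C \<and> C \<subseteq> sets M \<and>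
        (\<forall>A\<in>sets M. emeasure M A < \<infinity> \<longrightarrow>
           (\<forall>e>0. \<exists>B\<in>C. emeasure M ((A - B) \<union> (B - A)) < ennreal e)))"

definition amenable_group :: "('g, 'b) monoid_scheme \<Rightarrow> bool" where
  "amenable_group G \<longleftrightarrow>
     (\<exists>m :: 'g set \<Rightarrow> real.
        m (carrier G) = 1 \<and>
        (\<forall>A. A \<subseteq> carrier G \<longrightarrow> 0 \<le> m A) \<and>
        (\<forall>A B. A \<subseteq> carrier G \<longrightarrow> B \<subseteq> carrier G \<longrightarrow> A \<inter> B = {} \<longrightarrow>
                 m (A \<union> B) = m A + m B) \<and>
        (\<forall>g\<in>carrier G. \<forall>A. A \<subseteq> carrier G \<longrightarrow> m ((\<lambda>h. g \<otimes>\<^bsub>G\<^esub> h) ` A) = m A))"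

definition null_preserving_action ::
  "('g, 'b) monoid_scheme \<Rightarrow> 'a measure \<Rightarrow> ('g \<Rightarrow> 'a \<Rightarrow> 'a) \<Rightarrow> bool" where
  "null_preserving_action G M \<alpha> \<longleftrightarrow>
     (\<forall>g\<in>carrier G. \<alpha> g \<in> M \<rightarrow>\<^sub>M M \<and> bij_betw (\<alpha> g) (space M) (space M)) \<and>
     (\<forall>x\<in>space M. \<alpha> \<one>\<^bsub>G\<^esub> x = x) \<and>
     (\<forall>g\<in>carrier G. \<forall>h\<in>carrier G. \<forall>x\<in>space M. \<alpha> (g \<otimes>\<^bsub>G\<^esub> h) x = \<alpha> g (\<alpha> h x)) \<and>
     (\<forall>g\<in>carrier G. \<forall>A\<in>sets M. (\<alpha> g -` A \<inter> space M \<in> null_sets M \<longleftrightarrow> A \<in> null_sets M))"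

definition metrically_free ::
  "('g, 'b) monoid_scheme \<Rightarrow> 'a measure \<Rightarrow> ('g \<Rightarrow> 'a \<Rightarrow> 'a) \<Rightarrow> bool" where
  "metrically_free G M \<alpha> \<longleftrightarrow>
     (\<forall>K. finite K \<longrightarrow> K \<subseteq> carrier G \<longrightarrow>
        (\<forall>D\<in>sets M. 0 < emeasure M D \<longrightarrow>
           (\<exists>D'\<in>sets M. D' \<subseteq> D \<and> 0 < emeasure M D' \<and>
              (\<forall>g\<in>K. \<forall>h\<in>K. g \<noteq> h \<longrightarrow> \<alpha> g ` D' \<inter> \<alpha> h ` D' \<in> null_sets M))))"

definition Linf_op :: "'a measure \<Rightarrow> ('a \<Rightarrow> ('e::real_normed_vector \<Rightarrow>\<^sub>L 'e)) \<Rightarrow> bool" where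
  "Linf_op M a \<longleftrightarrow>
     (\<forall>v. (\<lambda>x. blinfun_apply (a x) v) \<in> borel_measurable M) \<and>
     (\<exists>C. AE x in M. norm (a x) \<le> C)"

definition rho :: "'a measure \<Rightarrow> ('g \<Rightarrow> 'a \<Rightarrow> 'a) \<Rightarrow> 'g \<Rightarrow> 'a \<Rightarrow> real" where
  "rho M \<alpha> g = (\<lambda>x. enn2real (RN_deriv M (distr M M (\<alpha> g)) x))"

text \<open>The operator sum_{g in F} a_g T_g on L^p_M(Omega,E), acting on representatives:
  (T_g f)(x) = rho_g(x)^{1/p} f(alpha_g^{-1} x).\<close>
definition cov_sum ::
  "('g, 'b) monoid_scheme \<Rightarrow> 'a measure \<Rightarrow> ('g \<Rightarrow> 'a \<Rightarrow> 'a) \<Rightarrow> real \<Rightarrow> 'g set \<Rightarrow>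
   ('g \<Rightarrow> 'a \<Rightarrow> ('e::real_normed_vector \<Rightarrow>\<^sub>L 'e)) \<Rightarrow> ('a \<Rightarrow> 'e) \<Rightarrow> 'a \<Rightarrow> 'e" where
  "cov_sum G M \<alpha> p F a f = (\<lambda>x. \<Sum>g\<in>F. blinfun_apply (a g x)
       ((rho M \<alpha> g x powr (1 / p)) *\<^sub>R f (\<alpha> (inv\<^bsub>G\<^esub> g) x)))"

definition Lp_pow :: "'a measure \<Rightarrow> real \<Rightarrow> ('a \<Rightarrow> 'e::real_normed_vector) \<Rightarrow> ennreal" where
  "Lp_pow M p f = (\<integral>\<^sup>+ x. ennreal (norm (f x) powr p) \<partial>M)"

definition Lp_opnorm_pow ::
  "'a measure \<Rightarrow> real \<Rightarrow> (('a \<Rightarrow> 'e::real_normed_vector) \<Rightarrow> 'a \<Rightarrow> 'e) \<Rightarrow> ennreal" where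
  "Lp_opnorm_pow M p S =
     (SUP f\<in>{f. f \<in> borel_measurable M \<and> Lp_pow M p f \<le> 1}. Lp_pow M p (S f))"

end

theory Submission
  imports Defs
begin

lemma meas_blin_apply:
  fixes A :: "'a \<Rightarrow> ('e::{banach, second_countable_topology} \<Rightarrow>\<^sub>L 'e)"
  assumes Av: "\<And>v. (\<lambda>x. blinfun_apply (A x) v) \<in> borel_measurable M"
    and w: "w \<in> borel_measurable M"
  shows "(\<lambda>x. blinfun_apply (A x) (w x)) \<in> borel_measurable M"
proof -
  obtain F where F: "\<And>i. simple_function M (F i)" "\<And>x. x\<in>space M \<Longrightarrow> (\<lambda>i. F i x) \<longlonglongrightarrow> w x"
    using borel_measurable_implies_sequence_metric[OF w, of 0] by blast
  have m: "(\<lambda>x. blinfun_apply (A x) (F i x)) \<in> borel_measurable M" for i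
  proof -
    let ?S = "F i ` space M"
    have fin: "finite ?S" using F(1) simple_functionD(1) by blast
    have eq: "blinfun_apply (A x) (F i x) = (\<Sum>v\<in>?S. indicator (F i -` {v} \<inter> space M) x *\<^sub>R blinfun_apply (A x) v)"
      if x: "x \<in> space M" for x
    proof -
      have "(\<Sum>v\<in>?S. indicator (F i -` {v} \<inter> space M) x *\<^sub>R blinfun_apply (A x) v)
          = (\<Sum>v\<in>?S. if v = F i x then blinfun_apply (A x) v else 0)"
        by (rule sum.cong) (auto simp: indicator_def x)
      also have "\<dots> = blinfun_apply (A x) (F i x)" using fin x by (simp add: sum.delta')
      finally show ?thesis by simp
    qed
    have "(\<lambda>x. \<Sum>v\<in>?S. indicator (F i -` {v} \<inter> space M) x *\<^sub>R blinfun_apply (A x) v) \<in> borel_measurable M"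
    proof (intro borel_measurable_sum borel_measurable_scaleR Av borel_measurable_indicator)
      fix v show "F i -` {v} \<inter> space M \<in> sets M" using F(1) simple_functionD(2) by blast
    qed
    then show ?thesis using eq measurable_cong by (smt (verit, best))
  qed
  show ?thesis
  proof (rule borel_measurable_LIMSEQ_metric[OF m])
    fix x assume "x \<in> space M"
    then show "(\<lambda>i. blinfun_apply (A x) (F i x)) \<longlonglongrightarrow> blinfun_apply (A x) (w x)"
      using F(2) by (intro blinfun.tendsto tendsto_const) auto
  qed
qed


lemma rn_identity:
  assumes sets_eq: "sets M1 = sets M2"
    and sf1: "sigma_finite_measure M1" and sf2: "sigma_finite_measure M2"
    and ac: "absolutely_continuous M2 M1"
    and am: "A \<in> M1 \<rightarrow>\<^sub>M M1" and bm: "B \<in> M1 \<rightarrow>\<^sub>M M1"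
    and inv: "\<And>x. x \<in> space M1 \<Longrightarrow> B (A x) = x"
    and acd1: "absolutely_continuous M1 (distr M1 M1 A)"
    and acd2: "absolutely_continuous M2 (distr M2 M2 A)"
  shows "AE x in M2. RN_deriv M2 M1 x * RN_deriv M1 (distr M1 M1 A) x
           = RN_deriv M2 (distr M2 M2 A) x * RN_deriv M2 M1 (B x)"
proof -
  interpret s1: sigma_finite_measure M1 by fact
  interpret s2: sigma_finite_measure M2 by fact
  have sp: "space M1 = space M2" using sets_eq by (rule sets_eq_imp_space_eq)
  have am2: "A \<in> M2 \<rightarrow>\<^sub>M M2" and bm2: "B \<in> M2 \<rightarrow>\<^sub>M M2"
    using am bm sets_eq by (auto cong: measurable_cong_sets)
  let ?h = "RN_deriv M2 M1" and ?R1 = "RN_deriv M1 (distr M1 M1 A)" and ?R2 = "RN_deriv M2 (distr M2 M2 A)"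
  have hd: "density M2 ?h = M1" using s2.density_RN_deriv[OF ac] sets_eq by simp
  have R1m: "?R1 \<in> borel_measurable M2"
    using borel_measurable_RN_deriv[of M1 "distr M1 M1 A"] sets_eq by (auto cong: measurable_cong_sets)
  have hm: "?h \<in> borel_measurable M2" by simp
  have R2m: "?R2 \<in> borel_measurable M2" by simp
  have hBm: "(\<lambda>x. ?h (B x)) \<in> borel_measurable M2" using hm bm2 by measurable
  have e1: "density M2 (\<lambda>x. ?h x * ?R1 x) = distr M1 M1 A"
  proof -
    have "density M2 (\<lambda>x. ?h x * ?R1 x) = density (density M2 ?h) ?R1"
      using density_density_eq[OF hm R1m] by simp
    also have "\<dots> = density M1 ?R1" using hd by simp
    also have "\<dots> = distr M1 M1 A" using s1.density_RN_deriv[OF acd1] by simp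
    finally show ?thesis .
  qed
  have e2: "density M2 (\<lambda>x. ?R2 x * ?h (B x)) = distr M1 M1 A"
  proof -
    have "density M2 (\<lambda>x. ?R2 x * ?h (B x)) = density (density M2 ?R2) (\<lambda>x. ?h (B x))"
      using density_density_eq[OF R2m hBm] by simp
    also have "\<dots> = density (distr M2 M2 A) (\<lambda>x. ?h (B x))"
      using s2.density_RN_deriv[OF acd2] by simp
    also have "\<dots> = distr (density M2 (\<lambda>x. ?h (B (A x)))) M2 A"
      by (rule density_distr[OF hBm am2])
    also have "density M2 (\<lambda>x. ?h (B (A x))) = density M2 ?h"
      by (rule density_cong) (use hm am2 bm2 inv sp in auto)
    also have "distr (density M2 ?h) M2 A = distr M1 M1 A"
      unfolding hd by (rule distr_cong) (use sets_eq in auto)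
    finally show ?thesis .
  qed
  show ?thesis
    by (rule s2.density_unique) (use e1 e2 hm R1m R2m hBm in auto)
qed


lemma Lp_pow_transfer:
  assumes sets_eq: "sets M1 = sets M2"
    and sf1: "sigma_finite_measure M1" and sf2: "sigma_finite_measure M2"
    and ac: "absolutely_continuous M2 M1" and p: "0 < p"
    and u: "u \<in> borel_measurable M1"
  shows "Lp_pow M2 p (\<lambda>x. (enn2real (RN_deriv M2 M1 x) powr (1/p)) *\<^sub>R u x) = Lp_pow M1 p u"
proof -
  interpret s2: sigma_finite_measure M2 by fact
  let ?h = "RN_deriv M2 M1"
  have hd: "density M2 ?h = M1" using s2.density_RN_deriv[OF ac] sets_eq by simp
  have fin: "AE x in M2. ?h x \<noteq> \<infinity>"
    using s2.RN_deriv_finite[OF sf1 ac] sets_eq by simp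
  have u2: "u \<in> borel_measurable M2" using u sets_eq by (auto cong: measurable_cong_sets)
  have pt: "norm ((enn2real (?h x) powr (1/p)) *\<^sub>R u x) powr p = enn2real (?h x) * norm (u x) powr p" for x
  proof -
    have "norm ((enn2real (?h x) powr (1/p)) *\<^sub>R u x) powr p
        = (enn2real (?h x) powr (1/p) * norm (u x)) powr p" by simp
    also have "\<dots> = (enn2real (?h x) powr (1/p)) powr p * norm (u x) powr p"
      by (rule powr_mult)
    also have "(enn2real (?h x) powr (1/p)) powr p = enn2real (?h x)"
      using p by (simp add: powr_powr)
    finally show ?thesis .
  qed
  have "Lp_pow M2 p (\<lambda>x. (enn2real (?h x) powr (1/p)) *\<^sub>R u x)
      = (\<integral>\<^sup>+ x. ?h x * ennreal (norm (u x) powr p) \<partial>M2)"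
    unfolding Lp_pow_def pt
  proof (rule nn_integral_cong_AE)
    show "AE x in M2. ennreal (enn2real (?h x) * norm (u x) powr p) = ?h x * ennreal (norm (u x) powr p)"
      using fin by eventually_elim (auto simp: ennreal_mult less_top)
  qed
  also have "\<dots> = (\<integral>\<^sup>+ x. ennreal (norm (u x) powr p) \<partial>density M2 ?h)"
    by (rule nn_integral_density[symmetric]) (use u2 in auto)
  also have "\<dots> = Lp_pow M1 p u" unfolding hd Lp_pow_def ..
  finally show ?thesis .
qed


lemma direction:
  fixes a :: "'g \<Rightarrow> 'a \<Rightarrow> ('e::{banach, second_countable_topology} \<Rightarrow>\<^sub>L 'e)"
  assumes sets_eq: "sets MA = sets MB"
    and sf1: "sigma_finite_measure MA" and sf2: "sigma_finite_measure MB"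
    and ac: "absolutely_continuous MB MA" and p: "0 < p"
    and am: "\<And>g. g \<in> F \<Longrightarrow> \<alpha> g \<in> MA \<rightarrow>\<^sub>M MA"
    and bm: "\<And>g. g \<in> F \<Longrightarrow> \<alpha> (inv\<^bsub>G\<^esub> g) \<in> MA \<rightarrow>\<^sub>M MA"
    and inv: "\<And>g x. g \<in> F \<Longrightarrow> x \<in> space MA \<Longrightarrow> \<alpha> (inv\<^bsub>G\<^esub> g) (\<alpha> g x) = x"
    and acd1: "\<And>g. g \<in> F \<Longrightarrow> absolutely_continuous MA (distr MA MA (\<alpha> g))"
    and acd2: "\<And>g. g \<in> F \<Longrightarrow> absolutely_continuous MB (distr MB MB (\<alpha> g))"
    and F: "finite F"
    and a: "\<And>g v. g \<in> F \<Longrightarrow> (\<lambda>x. blinfun_apply (a g x) v) \<in> borel_measurable MA"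
  shows "Lp_opnorm_pow MA p (cov_sum G MA \<alpha> p F a) \<le> Lp_opnorm_pow MB p (cov_sum G MB \<alpha> p F a)"
  unfolding Lp_opnorm_pow_def
proof (rule SUP_least)
  fix f :: "'a \<Rightarrow> 'e" assume "f \<in> {f. f \<in> borel_measurable MA \<and> Lp_pow MA p f \<le> 1}"
  then have fm: "f \<in> borel_measurable MA" and f1: "Lp_pow MA p f \<le> 1" by auto
  let ?h = "RN_deriv MB MA"
  define U where "U = (\<lambda>(u::'a \<Rightarrow> 'e) x. (enn2real (?h x) powr (1/p)) *\<^sub>R u x)"
  have sp: "space MA = space MB" using sets_eq by (rule sets_eq_imp_space_eq)
  have hm: "(\<lambda>x. enn2real (?h x)) \<in> borel_measurable MA"
    using sets_eq by (auto cong: measurable_cong_sets)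
  have Uf_m: "U f \<in> borel_measurable MB"
  proof -
    have "U f \<in> borel_measurable MA" unfolding U_def using hm fm by measurable
    then show ?thesis using sets_eq by (auto cong: measurable_cong_sets)
  qed
  have Uf1: "Lp_pow MB p (U f) = Lp_pow MA p f"
    unfolding U_def by (rule Lp_pow_transfer[OF sets_eq sf1 sf2 ac p fm])
  have S1m: "cov_sum G MA \<alpha> p F a f \<in> borel_measurable MA"
    unfolding cov_sum_def
  proof (rule borel_measurable_sum, rule meas_blin_apply)
    fix g v assume g: "g \<in> F"
    show "(\<lambda>x. blinfun_apply (a g x) v) \<in> borel_measurable MA" using a[OF g] .
    have r: "(\<lambda>x. enn2real (RN_deriv MA (distr MA MA (\<alpha> g)) x)) \<in> borel_measurable MA" by simp
    have c: "(\<lambda>x. f (\<alpha> (inv\<^bsub>G\<^esub> g) x)) \<in> borel_measurable MA"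
      using measurable_compose[OF bm[OF g] fm] by (simp add: comp_def)
    show "(\<lambda>x. rho MA \<alpha> g x powr (1 / p) *\<^sub>R f (\<alpha> (inv\<^bsub>G\<^esub> g) x)) \<in> borel_measurable MA"
      unfolding rho_def using r c by measurable
  qed
  have ident: "\<forall>g\<in>F. AE x in MB. ?h x * RN_deriv MA (distr MA MA (\<alpha> g)) x
           = RN_deriv MB (distr MB MB (\<alpha> g)) x * ?h (\<alpha> (inv\<^bsub>G\<^esub> g) x)"
    using rn_identity[OF sets_eq sf1 sf2 ac am bm inv acd1 acd2] by blast
  have identAE: "AE x in MB. \<forall>g\<in>F. ?h x * RN_deriv MA (distr MA MA (\<alpha> g)) x
           = RN_deriv MB (distr MB MB (\<alpha> g)) x * ?h (\<alpha> (inv\<^bsub>G\<^esub> g) x)"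
    using ident F by (intro AE_ball_countable') (auto intro: countable_finite)
  have key: "AE x in MB. cov_sum G MB \<alpha> p F a (U f) x = U (cov_sum G MA \<alpha> p F a f) x"
    using identAE
  proof eventually_elim
    case (elim x)
    have "cov_sum G MB \<alpha> p F a (U f) x = (\<Sum>g\<in>F. blinfun_apply (a g x)
       ((enn2real (?h x) powr (1/p)) *\<^sub>R ((rho MA \<alpha> g x powr (1 / p)) *\<^sub>R f (\<alpha> (inv\<^bsub>G\<^esub> g) x))))"
      unfolding cov_sum_def
    proof (rule sum.cong[OF refl])
      fix g assume g: "g \<in> F"
      have e: "enn2real (?h x) * rho MA \<alpha> g x = rho MB \<alpha> g x * enn2real (?h (\<alpha> (inv\<^bsub>G\<^esub> g) x))"
      proof -
        have "enn2real (?h x * RN_deriv MA (distr MA MA (\<alpha> g)) x)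
           = enn2real (RN_deriv MB (distr MB MB (\<alpha> g)) x * ?h (\<alpha> (inv\<^bsub>G\<^esub> g) x))"
          using bspec[OF elim g] by (rule arg_cong)
        then show ?thesis unfolding rho_def enn2real_mult .
      qed
      have "rho MB \<alpha> g x powr (1 / p) *\<^sub>R U f (\<alpha> (inv\<^bsub>G\<^esub> g) x)
          = (rho MB \<alpha> g x powr (1 / p) * enn2real (?h (\<alpha> (inv\<^bsub>G\<^esub> g) x)) powr (1/p)) *\<^sub>R f (\<alpha> (inv\<^bsub>G\<^esub> g) x)"
        unfolding U_def by simp
      also have "rho MB \<alpha> g x powr (1 / p) * enn2real (?h (\<alpha> (inv\<^bsub>G\<^esub> g) x)) powr (1/p)
          = (rho MB \<alpha> g x * enn2real (?h (\<alpha> (inv\<^bsub>G\<^esub> g) x))) powr (1/p)"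
        by (simp add: rho_def powr_mult)
      also have "\<dots> = (enn2real (?h x) * rho MA \<alpha> g x) powr (1/p)" using e by simp
      also have "\<dots> = enn2real (?h x) powr (1/p) * rho MA \<alpha> g x powr (1/p)"
        by (simp add: rho_def powr_mult)
      finally show "blinfun_apply (a g x) (rho MB \<alpha> g x powr (1 / p) *\<^sub>R U f (\<alpha> (inv\<^bsub>G\<^esub> g) x))
        = blinfun_apply (a g x) ((enn2real (?h x) powr (1/p)) *\<^sub>R ((rho MA \<alpha> g x powr (1 / p)) *\<^sub>R f (\<alpha> (inv\<^bsub>G\<^esub> g) x)))"
        by simp
    qed
    also have "\<dots> = U (cov_sum G MA \<alpha> p F a f) x"
      unfolding U_def cov_sum_def by (simp add: blinfun.scaleR_right scaleR_sum_right)
    finally show ?case .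
  qed
  have "Lp_pow MA p (cov_sum G MA \<alpha> p F a f) = Lp_pow MB p (U (cov_sum G MA \<alpha> p F a f))"
    unfolding U_def by (rule Lp_pow_transfer[OF sets_eq sf1 sf2 ac p S1m, symmetric])
  also have "\<dots> = Lp_pow MB p (cov_sum G MB \<alpha> p F a (U f))"
    unfolding Lp_pow_def by (rule nn_integral_cong_AE) (use key in auto)
  also have "\<dots> \<le> (SUP f\<in>{f. f \<in> borel_measurable MB \<and> Lp_pow MB p f \<le> 1}. Lp_pow MB p (cov_sum G MB \<alpha> p F a f))"
    by (rule SUP_upper) (use Uf_m Uf1 f1 in auto)
  finally show "Lp_pow MA p (cov_sum G MA \<alpha> p F a f) \<le> (SUP f\<in>{f. f \<in> borel_measurable MB \<and> Lp_pow MB p f \<le> 1}. Lp_pow MB p (cov_sum G MB \<alpha> p F a f))" .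
qed


theorem mainTheorem11:
  fixes p :: real
    and M1 M2 :: "'a measure"
    and G :: "('g, 'b) monoid_scheme"
    and \<alpha> :: "'g \<Rightarrow> 'a \<Rightarrow> 'a"
    and F :: "'g set"
    and a :: "'g \<Rightarrow> 'a \<Rightarrow> ('e::{banach, second_countable_topology} \<Rightarrow>\<^sub>L 'e)"
  assumes p: "1 < p"
    and sets_eq: "sets M1 = sets M2"
    and sf1: "sigma_finite_measure M1" and sf2: "sigma_finite_measure M2"
    and sep1: "separable_measure M1" and sep2: "separable_measure M2"
    and ac12: "absolutely_continuous M1 M2" and ac21: "absolutely_continuous M2 M1"
    and grp: "group G" and cnt: "countable (carrier G)" and amen: "amenable_group G"
    and act: "null_preserving_action G M1 \<alpha>"
    and free: "metrically_free G M1 \<alpha>"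
    and F: "finite F" "F \<subseteq> carrier G"
    and a: "\<forall>g\<in>F. Linf_op M1 (a g)"
  shows "Lp_opnorm_pow M1 p (cov_sum G M1 \<alpha> p F a) = Lp_opnorm_pow M2 p (cov_sum G M2 \<alpha> p F a)"
proof -
  have sp: "space M1 = space M2" using sets_eq by (rule sets_eq_imp_space_eq)
  have p0: "0 < p" using p by simp
  have gc: "g \<in> carrier G" if "g \<in> F" for g using F that by auto
  have am1: "\<alpha> g \<in> M1 \<rightarrow>\<^sub>M M1" if "g \<in> F" for g
    using act gc[OF that] unfolding null_preserving_action_def by blast
  have bm1: "\<alpha> (inv\<^bsub>G\<^esub> g) \<in> M1 \<rightarrow>\<^sub>M M1" if "g \<in> F" for g
    using act group.inv_closed[OF grp gc[OF that]] unfolding null_preserving_action_def by blast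
  have am2: "\<alpha> g \<in> M2 \<rightarrow>\<^sub>M M2" if "g \<in> F" for g
    using am1[OF that] sets_eq by (auto cong: measurable_cong_sets)
  have bm2: "\<alpha> (inv\<^bsub>G\<^esub> g) \<in> M2 \<rightarrow>\<^sub>M M2" if "g \<in> F" for g
    using bm1[OF that] sets_eq by (auto cong: measurable_cong_sets)
  have inv1: "\<alpha> (inv\<^bsub>G\<^esub> g) (\<alpha> g x) = x" if "g \<in> F" "x \<in> space M1" for g x
  proof -
    have ic: "inv\<^bsub>G\<^esub> g \<in> carrier G" using group.inv_closed[OF grp gc[OF that(1)]] .
    have "\<alpha> (inv\<^bsub>G\<^esub> g) (\<alpha> g x) = \<alpha> (inv\<^bsub>G\<^esub> g \<otimes>\<^bsub>G\<^esub> g) x"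
      using act ic gc[OF that(1)] that(2) unfolding null_preserving_action_def by auto
    also have "inv\<^bsub>G\<^esub> g \<otimes>\<^bsub>G\<^esub> g = \<one>\<^bsub>G\<^esub>" using group.l_inv[OF grp gc[OF that(1)]] .
    finally show ?thesis using act that(2) unfolding null_preserving_action_def by auto
  qed
  have inv2: "\<alpha> (inv\<^bsub>G\<^esub> g) (\<alpha> g x) = x" if "g \<in> F" "x \<in> space M2" for g x
    using inv1 that sp by auto
  have np: "\<alpha> g -` A \<inter> space M1 \<in> null_sets M1" if "g \<in> F" "A \<in> null_sets M1" for g A
  proof -
    have "A \<in> sets M1" using that(2) by auto
    then show ?thesis using act gc[OF that(1)] that(2) unfolding null_preserving_action_def by blast
  qed
  have acd1: "absolutely_continuous M1 (distr M1 M1 (\<alpha> g))" if g: "g \<in> F" for g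
    unfolding absolutely_continuous_def
  proof
    fix A assume A: "A \<in> null_sets M1"
    then have "emeasure (distr M1 M1 (\<alpha> g)) A = emeasure M1 (\<alpha> g -` A \<inter> space M1)"
      using am1[OF g] by (intro emeasure_distr) auto
    also have "\<dots> = 0" using np[OF g A] by auto
    finally show "A \<in> null_sets (distr M1 M1 (\<alpha> g))" using A by (intro null_setsI) auto
  qed
  have acd2: "absolutely_continuous M2 (distr M2 M2 (\<alpha> g))" if g: "g \<in> F" for g
    unfolding absolutely_continuous_def
  proof
    fix A assume A: "A \<in> null_sets M2"
    then have A1: "A \<in> null_sets M1" using ac21 unfolding absolutely_continuous_def by auto
    have "emeasure (distr M2 M2 (\<alpha> g)) A = emeasure M2 (\<alpha> g -` A \<inter> space M2)"
      using am2[OF g] A by (intro emeasure_distr) auto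
    also have "\<dots> = 0" using np[OF g A1] ac12 sp unfolding absolutely_continuous_def by auto
    finally show "A \<in> null_sets (distr M2 M2 (\<alpha> g))" using A by (intro null_setsI) auto
  qed
  have a1: "(\<lambda>x. blinfun_apply (a g x) v) \<in> borel_measurable M1" if "g \<in> F" for g v
    using a that unfolding Linf_op_def by blast
  have a2: "(\<lambda>x. blinfun_apply (a g x) v) \<in> borel_measurable M2" if "g \<in> F" for g v
    using a1[OF that] sets_eq by (auto cong: measurable_cong_sets)
  have le1: "Lp_opnorm_pow M1 p (cov_sum G M1 \<alpha> p F a) \<le> Lp_opnorm_pow M2 p (cov_sum G M2 \<alpha> p F a)"
    by (rule direction[where MA=M1 and MB=M2 and p=p and F=F and \<alpha>=\<alpha> and G=G and a=a, OF sets_eq sf1 sf2 ac21 p0 am1 bm1 inv1 acd1 acd2 F(1) a1])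
  have le2: "Lp_opnorm_pow M2 p (cov_sum G M2 \<alpha> p F a) \<le> Lp_opnorm_pow M1 p (cov_sum G M1 \<alpha> p F a)"
    by (rule direction[where MA=M2 and MB=M1 and p=p and F=F and \<alpha>=\<alpha> and G=G and a=a, OF sets_eq[symmetric] sf2 sf1 ac12 p0 am2 bm2 inv2 acd2 acd1 F(1) a2])
  show ?thesis using le1 le2 by (rule antisym)
qed

end
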